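(* Let $p\in(1,+\infty)$ and let $V\colon\mathbb{R}^2\to\mathbb{R}$ be a $C^1$ positive coercive function with $|\nabla V(x)|\le CV^{3/2}(x)$ for a.e. $x$ and some $C>0$. Let \[ I(u)=\frac12\int_{\mathbb{R}^2}(|\nabla u|^2+V(x)u^2)\,dx-\frac1{p+1}\|u\|_2^2\int_{\mathbb{R}^2}V(x)|u|^{p+1}dx,\qquad u\in H^1_V(\mathbb{R}^2), \] and \[ \mathcal N=\Big\{u\in H^1_V(\mathbb{R}^2): u\ne0,\ \int_{\mathbb{R}^2}(|\nabla u|^2+V(x)u^2)\,dx=\frac{p+3}{p+1}\|u\|_2^2\int_{\mathbb{R}^2}V(x)|u|^{p+1}dx\Big\}. \] Then $\sigma:=\inf_{u\in\mathcal N}I(u)>0$.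
   Context: $H^1_V(\mathbb{R}^2)$ is the completion of $C_0^\infty(\mathbb{R}^2)$ with respect to the norm $\|u\|_V=\left(\int_{\mathbb{R}^2}(|\nabla u|^2+V|u|^2)\,dx\right)^{1/2}$; $\|\cdot\|_2$ is the $L^2$ norm. *)

theory Defs
  imports "HOL-Analysis.Analysis"
begin

fun Ck :: "nat \<Rightarrow> (real^2 \<Rightarrow> real) \<Rightarrow> bool" where
  "Ck 0 f = continuous_on UNIV f"
| "Ck (Suc k) f = (f differentiable_on UNIV \<and> continuous_on UNIV f \<and>
      (\<forall>v. Ck k (\<lambda>x. frechet_derivative f (at x) v)))"

definition smooth_fun :: "(real^2 \<Rightarrow> real) \<Rightarrow> bool" where
  "smooth_fun f \<longleftrightarrow> (\<forall>k. Ck k f)"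

definition Cc_inf :: "(real^2 \<Rightarrow> real) \<Rightarrow> bool" where
  "Cc_inf f \<longleftrightarrow> smooth_fun f \<and> compact (closure {x. f x \<noteq> 0})"

definition grad :: "(real^2 \<Rightarrow> real) \<Rightarrow> real^2 \<Rightarrow> real^2" where
  "grad f x = (\<chi> i. frechet_derivative f (at x) (axis i 1))"

text \<open>Elements of H^1_V(R^2), the completion of C_0^infinity w.r.t. the V-norm, represented
  as pairs (u, g) of a function and its (weak) gradient which are the limit of a
  sequence of C_0^infinity functions in the norm
  (integral of |grad phi - g|^2 + V |phi - u|^2).\<close>
definition H1V :: "(real^2 \<Rightarrow> real) \<Rightarrow> (real^2 \<Rightarrow> real) \<Rightarrow> (real^2 \<Rightarrow> real^2) \<Rightarrow> bool" where
  "H1V V u g \<longleftrightarrow> u \<in> borel_measurable lborel \<and> g \<in> borel_measurable lborel \<and>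
     (\<exists>\<phi> :: nat \<Rightarrow> real^2 \<Rightarrow> real. (\<forall>n. Cc_inf (\<phi> n)) \<and>
        (\<lambda>n. \<integral>\<^sup>+ x. ennreal ((norm (grad (\<phi> n) x - g x))\<^sup>2 + V x * (\<phi> n x - u x)\<^sup>2) \<partial>lborel)
          \<longlonglongrightarrow> 0)"

definition Vnorm2 :: "(real^2 \<Rightarrow> real) \<Rightarrow> (real^2 \<Rightarrow> real) \<Rightarrow> (real^2 \<Rightarrow> real^2) \<Rightarrow> real" where
  "Vnorm2 V u g = (\<integral>x. (norm (g x))\<^sup>2 + V x * (u x)\<^sup>2 \<partial>lborel)"

definition L2norm2 :: "(real^2 \<Rightarrow> real) \<Rightarrow> real" where
  "L2norm2 u = (\<integral>x. (u x)\<^sup>2 \<partial>lborel)"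

definition Ifun :: "real \<Rightarrow> (real^2 \<Rightarrow> real) \<Rightarrow> (real^2 \<Rightarrow> real) \<Rightarrow> (real^2 \<Rightarrow> real^2) \<Rightarrow> real" where
  "Ifun p V u g = Vnorm2 V u g / 2
     - L2norm2 u * (\<integral>x. V x * \<bar>u x\<bar> powr (p + 1) \<partial>lborel) / (p + 1)"

definition Nehari :: "real \<Rightarrow> (real^2 \<Rightarrow> real) \<Rightarrow> ((real^2 \<Rightarrow> real) \<times> (real^2 \<Rightarrow> real^2)) set" where
  "Nehari p V = {(u, g). H1V V u g \<and> \<not> (AE x in lborel. u x = 0) \<and>
     Vnorm2 V u g = (p + 3) / (p + 1) * L2norm2 u * (\<integral>x. V x * \<bar>u x\<bar> powr (p + 1) \<partial>lborel)}"

end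

theory Submission
  imports Defs
begin

definition T2 :: "real \<times> real \<Rightarrow> real^2" where
  "T2 z = (\<chi> i. if i = 1 then fst z else snd z)"

lemma T2_1[simp]: "T2 z $ 1 = fst z" and T2_2[simp]: "T2 z $ 2 = snd z"
  by (auto simp: T2_def)

lemma Basis_real2: "(Basis :: (real^2) set) = {axis 1 1, axis 2 1}"
  by (auto simp: Basis_vec_def UNIV_2)

lemma axis12_ne: "axis (1::2) (1::real) \<noteq> axis 2 1"
  by (simp add: axis_eq_axis)

lemma T2_meas[measurable]: "T2 \<in> borel_measurable (lborel \<Otimes>\<^sub>M lborel)"
proof -
  have "T2 \<in> borel_measurable borel"
    unfolding T2_def
    apply (intro borel_measurable_continuous_onI continuous_on_vec_lambda)
    subgoal for i by (cases "i = 1") (auto intro!: continuous_intros)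
    done
  then show ?thesis by (simp add: lborel_prod)
qed

lemma T2_vimage_box: "T2 -` box l u = box (l$1) (u$1) \<times> box (l$2) (u$2)"
  by (auto simp: mem_box Basis_real2 inner_axis)

lemma T2_distr: "distr (lborel \<Otimes>\<^sub>M lborel) borel T2 = lborel"
proof (rule lborel_eqI[symmetric])
  fix l u :: "real^2"
  assume le: "\<And>b. b \<in> Basis \<Longrightarrow> l \<bullet> b \<le> u \<bullet> b"
  have l1: "l$1 \<le> u$1" and l2: "l$2 \<le> u$2" using le[of "axis 1 1"] le[of "axis 2 1"]
    by (auto simp: Basis_real2 inner_axis)
  have "emeasure (distr (lborel \<Otimes>\<^sub>M lborel) borel T2) (box l u)
     = emeasure (lborel \<Otimes>\<^sub>M lborel) (box (l$1) (u$1) \<times> box (l$2) (u$2))"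
    by (subst emeasure_distr) (auto simp: T2_vimage_box space_pair_measure)
  also have "\<dots> = ennreal (u$1 - l$1) * ennreal (u$2 - l$2)"
    using l1 l2 by (simp add: lborel.emeasure_pair_measure_Times)
  also have "\<dots> = ennreal ((u$1 - l$1) * (u$2 - l$2))"
    using l1 l2 by (simp add: ennreal_mult)
  also have "(u$1 - l$1) * (u$2 - l$2) = (\<Prod>b\<in>Basis. (u - l) \<bullet> b)"
    by (simp add: Basis_real2 axis12_ne inner_axis)
  finally show "emeasure (distr (lborel \<Otimes>\<^sub>M lborel) borel T2) (box l u) = (\<Prod>b\<in>Basis. (u - l) \<bullet> b)" .
qed simp

lemma nn_integral_T2:
  assumes [measurable]: "f \<in> borel_measurable lborel"
  shows "(\<integral>\<^sup>+x. f x \<partial>lborel) = (\<integral>\<^sup>+a. \<integral>\<^sup>+b. f (T2 (a,b)) \<partial>lborel \<partial>lborel)"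
proof -
  have "(\<integral>\<^sup>+x. f x \<partial>lborel) = (\<integral>\<^sup>+x. f x \<partial>distr (lborel \<Otimes>\<^sub>M lborel) borel T2)"
    by (simp add: T2_distr)
  also have "\<dots> = (\<integral>\<^sup>+z. f (T2 z) \<partial>(lborel \<Otimes>\<^sub>M lborel))"
    by (subst nn_integral_distr) auto
  also have "\<dots> = (\<integral>\<^sup>+a. \<integral>\<^sup>+b. f (T2 (a,b)) \<partial>lborel \<partial>lborel)"
    by (subst lborel.nn_integral_fst[symmetric]) auto
  finally show ?thesis .
qed

lemma line_bound:
  fixes \<psi> :: "real^2 \<Rightarrow> real" and D :: "real^2 \<Rightarrow> real^2"
  assumes der: "\<And>x. (\<psi> has_derivative (\<lambda>h. D x \<bullet> h)) (at x)"
    and cont: "continuous_on UNIV D"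
    and supp: "\<And>x. norm x > R \<Longrightarrow> \<psi> x = 0"
    and e: "norm e = 1"
  shows "ennreal \<bar>\<psi> (x + s *\<^sub>R e)\<bar> \<le> (\<integral>\<^sup>+t. ennreal \<bar>D (x + t *\<^sub>R e) \<bullet> e\<bar> \<partial>lborel)"
proof -
  define a0 where "a0 = -(\<bar>R\<bar> + norm x + 1) - \<bar>s\<bar>"
  have a0s: "a0 \<le> s" unfolding a0_def using norm_ge_zero[of x] by linarith
  have "norm (x + a0 *\<^sub>R e) \<ge> \<bar>a0\<bar> - norm x"
    using norm_triangle_ineq2[of "a0 *\<^sub>R e" "-x"] e by (simp add: add.commute)
  then have "norm (x + a0 *\<^sub>R e) > R" unfolding a0_def by auto
  then have z: "\<psi> (x + a0 *\<^sub>R e) = 0" using supp by auto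
  define h' where "h' t = D (x + t *\<^sub>R e) \<bullet> e" for t
  have hd: "((\<lambda>t. \<psi> (x + t *\<^sub>R e)) has_vector_derivative h' t) (at t within S)" for t S
  proof -
    have "((\<lambda>t. x + t *\<^sub>R e) has_derivative (\<lambda>s. s *\<^sub>R e)) (at t within S)"
      by (auto intro!: derivative_eq_intros)
    from has_derivative_compose[OF this has_derivative_at_withinI[OF der]]
    show ?thesis unfolding has_vector_derivative_def h'_def
      by (simp add: inner_commute[of "D _"] )
  qed
  have hc: "continuous_on A h'" for A
    unfolding h'_def
    by (intro continuous_intros continuous_on_compose2[OF cont]) auto
  have "integral\<^sup>L lborel (\<lambda>t. indicator {a0 .. s} t *\<^sub>R h' t) = \<psi> (x + s *\<^sub>R e) - \<psi> (x + a0 *\<^sub>R e)"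
    by (rule integral_FTC_atLeastAtMost[OF a0s hd hc])
  then have eq: "\<psi> (x + s *\<^sub>R e) = integral\<^sup>L lborel (\<lambda>t. indicator {a0 .. s} t *\<^sub>R h' t)"
    using z by simp
  have int: "integrable lborel (\<lambda>t. indicator {a0 .. s} t *\<^sub>R h' t)"
    using borel_integrable_atLeastAtMost'[OF hc] unfolding set_integrable_def .
  have "ennreal \<bar>\<psi> (x + s *\<^sub>R e)\<bar> \<le> (\<integral>\<^sup>+t. norm (indicator {a0 .. s} t *\<^sub>R h' t) \<partial>lborel)"
    using integral_norm_bound_ennreal[OF int] eq by simp
  also have "\<dots> \<le> (\<integral>\<^sup>+t. ennreal \<bar>h' t\<bar> \<partial>lborel)"
    by (intro nn_integral_mono) (auto simp: indicator_def)
  finally show ?thesis unfolding h'_def .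
qed

lemma T2_split1: "T2 (a,b) = T2 (0,b) + a *\<^sub>R axis 1 1"
  by (simp add: vec_eq_iff forall_2 axis_def)
lemma T2_split2: "T2 (a,b) = T2 (a,0) + b *\<^sub>R axis 2 1"
  by (simp add: vec_eq_iff forall_2 axis_def)

lemma gn2d:
  fixes \<psi> :: "real^2 \<Rightarrow> real" and D :: "real^2 \<Rightarrow> real^2"
  assumes der: "\<And>x. (\<psi> has_derivative (\<lambda>h. D x \<bullet> h)) (at x)"
    and cont: "continuous_on UNIV D"
    and supp: "\<And>x. norm x > R \<Longrightarrow> \<psi> x = 0"
  shows "(\<integral>\<^sup>+x. ennreal ((\<psi> x)\<^sup>2) \<partial>lborel) \<le> (\<integral>\<^sup>+x. ennreal (norm (D x)) \<partial>lborel)\<^sup>2"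
proof -
  define f1 where "f1 x = ennreal \<bar>D x $ 1\<bar>" for x
  define f2 where "f2 x = ennreal \<bar>D x $ 2\<bar>" for x
  have cD: "continuous_on UNIV (\<lambda>x. D x $ i)" for i
    by (intro continuous_intros cont)
  have [measurable]: "f1 \<in> borel_measurable borel" "f2 \<in> borel_measurable borel"
    unfolding f1_def f2_def by (intro measurable_compose[OF _ measurable_ennreal] borel_measurable_continuous_onI continuous_intros cD)+
  have [measurable]: "D \<in> borel_measurable borel"
    by (intro borel_measurable_continuous_onI cont)
  have "continuous_on UNIV \<psi>"
    using der by (meson continuous_at_imp_continuous_on has_derivative_continuous)
  then have [measurable]: "\<psi> \<in> borel_measurable borel"
    by (intro borel_measurable_continuous_onI)
  define A where "A b = (\<integral>\<^sup>+t. f1 (T2 (t,b)) \<partial>lborel)" for b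
  define B where "B a = (\<integral>\<^sup>+s. f2 (T2 (a,s)) \<partial>lborel)" for a
  have [measurable]: "A \<in> borel_measurable lborel" "B \<in> borel_measurable lborel"
    unfolding A_def B_def by measurable
  have n1: "norm (axis (1::2) (1::real)) = 1" by simp
  have n2: "norm (axis (2::2) (1::real)) = 1" by simp
  have pA: "ennreal \<bar>\<psi> (T2 (a,b))\<bar> \<le> A b" for a b
  proof -
    have "ennreal \<bar>\<psi> (T2 (0,b) + a *\<^sub>R axis 1 1)\<bar> \<le> (\<integral>\<^sup>+t. ennreal \<bar>D (T2 (0,b) + t *\<^sub>R axis 1 1) \<bullet> axis 1 1\<bar> \<partial>lborel)"
      by (rule line_bound[where R=R, OF der cont supp n1])
    then show ?thesis unfolding A_def f1_def
      by (simp add: T2_split1[symmetric] cart_eq_inner_axis[symmetric]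
            T2_split1[of _ b, symmetric])
  qed
  have pB: "ennreal \<bar>\<psi> (T2 (a,b))\<bar> \<le> B a" for a b
  proof -
    have "ennreal \<bar>\<psi> (T2 (a,0) + b *\<^sub>R axis 2 1)\<bar> \<le> (\<integral>\<^sup>+t. ennreal \<bar>D (T2 (a,0) + t *\<^sub>R axis 2 1) \<bullet> axis 2 1\<bar> \<partial>lborel)"
      by (rule line_bound[where R=R, OF der cont supp n2])
    then show ?thesis unfolding B_def f2_def
      by (simp add: cart_eq_inner_axis[symmetric] T2_split2[of a, symmetric])
  qed
  have "(\<integral>\<^sup>+x. ennreal ((\<psi> x)\<^sup>2) \<partial>lborel) = (\<integral>\<^sup>+a. \<integral>\<^sup>+b. ennreal ((\<psi> (T2 (a,b)))\<^sup>2) \<partial>lborel \<partial>lborel)"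
    by (rule nn_integral_T2) measurable
  also have "\<dots> \<le> (\<integral>\<^sup>+a. \<integral>\<^sup>+b. B a * A b \<partial>lborel \<partial>lborel)"
  proof (intro nn_integral_mono)
    fix a b
    have "ennreal ((\<psi> (T2 (a,b)))\<^sup>2) = ennreal \<bar>\<psi> (T2 (a,b))\<bar> * ennreal \<bar>\<psi> (T2 (a,b))\<bar>"
      by (simp add: ennreal_mult[symmetric] power2_eq_square abs_mult[symmetric])
    also have "\<dots> \<le> B a * A b" using pA pB by (intro mult_mono) auto
    finally show "ennreal ((\<psi> (T2 (a,b)))\<^sup>2) \<le> B a * A b" .
  qed
  also have "\<dots> = (\<integral>\<^sup>+a. B a * (\<integral>\<^sup>+b. A b \<partial>lborel) \<partial>lborel)"
    by (simp add: nn_integral_cmult)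
  also have "\<dots> = (\<integral>\<^sup>+a. B a \<partial>lborel) * (\<integral>\<^sup>+b. A b \<partial>lborel)"
    by (simp add: nn_integral_multc)
  also have "(\<integral>\<^sup>+a. B a \<partial>lborel) = (\<integral>\<^sup>+x. f2 x \<partial>lborel)"
    unfolding B_def by (rule nn_integral_T2[symmetric]) measurable
  also have "(\<integral>\<^sup>+b. A b \<partial>lborel) = (\<integral>\<^sup>+t. \<integral>\<^sup>+b. f1 (T2 (t,b)) \<partial>lborel \<partial>lborel)"
    unfolding A_def by (rule lborel_pair.Fubini') measurable
  also have "\<dots> = (\<integral>\<^sup>+x. f1 x \<partial>lborel)"
    by (rule nn_integral_T2[symmetric]) measurable
  also have "(\<integral>\<^sup>+x. f2 x \<partial>lborel) * (\<integral>\<^sup>+x. f1 x \<partial>lborel) \<le>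
     (\<integral>\<^sup>+x. ennreal (norm (D x)) \<partial>lborel) * (\<integral>\<^sup>+x. ennreal (norm (D x)) \<partial>lborel)"
    unfolding f1_def f2_def
    by (intro mult_mono nn_integral_mono) (auto simp: component_le_norm_cart)
  finally show ?thesis by (simp add: power2_eq_square)
qed

lemma vec2_expand: "(h::real^2) = h$1 *\<^sub>R axis 1 1 + h$2 *\<^sub>R axis 2 1"
  by (simp add: vec_eq_iff forall_2 axis_def)

lemma inner_vec2: "(a::real^2) \<bullet> b = a$1 * b$1 + a$2 * b$2"
  by (simp add: inner_vec_def UNIV_2)

lemma linear_vec2:
  assumes "linear (f :: real^2 \<Rightarrow> real)"
  shows "f h = (\<chi> i. f (axis i 1)) \<bullet> h"
proof -
  have "f h = f (h$1 *\<^sub>R axis 1 1 + h$2 *\<^sub>R axis 2 1)" by (subst vec2_expand) simp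
  also have "\<dots> = h$1 * f (axis 1 1) + h$2 * f (axis 2 1)"
    using assms by (simp only: linear_add linear_scale linear_cmul real_scaleR_def)
  finally show ?thesis by (simp add: inner_vec2)
qed

lemma Cc_inf_reg:
  assumes "Cc_inf \<phi>"
  shows "\<And>x. (\<phi> has_derivative (\<lambda>h. grad \<phi> x \<bullet> h)) (at x)"
    and "continuous_on UNIV (grad \<phi>)"
    and "\<exists>R. \<forall>x. norm x > R \<longrightarrow> \<phi> x = 0"
proof -
  have "Ck 1 \<phi>" using assms unfolding Cc_inf_def smooth_fun_def by blast
  then have d: "\<phi> differentiable_on UNIV" and c: "\<And>v. continuous_on UNIV (\<lambda>x. frechet_derivative \<phi> (at x) v)"
    by auto
  fix x
  have "\<phi> differentiable (at x)" using d by (simp add: differentiable_on_def)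
  then have hd: "(\<phi> has_derivative frechet_derivative \<phi> (at x)) (at x)"
    by (simp add: frechet_derivative_works)
  have l: "linear (frechet_derivative \<phi> (at x))" by (rule has_derivative_linear[OF hd])
  have "frechet_derivative \<phi> (at x) = (\<lambda>h. grad \<phi> x \<bullet> h)"
    by (rule ext, rule linear_vec2[OF l, unfolded grad_def[symmetric]])
  with hd show "(\<phi> has_derivative (\<lambda>h. grad \<phi> x \<bullet> h)) (at x)" by simp
next
  have "Ck 1 \<phi>" using assms unfolding Cc_inf_def smooth_fun_def by blast
  then have c: "\<And>v. continuous_on UNIV (\<lambda>x. frechet_derivative \<phi> (at x) v)"
    by auto
  show "continuous_on UNIV (grad \<phi>)"
    unfolding grad_def by (intro continuous_on_vec_lambda c)
next
  have "compact (closure {x. \<phi> x \<noteq> 0})" using assms unfolding Cc_inf_def by blast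
  then have "bounded (closure {x. \<phi> x \<noteq> 0})" by (rule compact_imp_bounded)
  then have "\<exists>R. \<forall>y\<in>closure {x. \<phi> x \<noteq> 0}. norm y \<le> R"
    by (simp only: bounded_iff)
  then obtain R where R0: "\<forall>y\<in>closure {x. \<phi> x \<noteq> 0}. norm y \<le> R" by (erule exE)
  have R: "norm y \<le> R" if "y \<in> closure {x. \<phi> x \<noteq> 0}" for y
    using R0 that by auto
  have "\<forall>x. norm x > R \<longrightarrow> \<phi> x = 0"
  proof (intro allI impI)
    fix x :: "real^2" assume "norm x > R"
    show "\<phi> x = 0"
    proof (rule ccontr)
      assume "\<phi> x \<noteq> 0"
      then have "x \<in> {x. \<phi> x \<noteq> 0}" by simp
      then have "x \<in> closure {x. \<phi> x \<noteq> 0}" by (rule closure_subset[THEN subsetD])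
      then have "norm x \<le> R" by (rule R)
      then show False using \<open>norm x > R\<close> by simp
    qed
  qed
  then show "\<exists>R. \<forall>x. norm x > R \<longrightarrow> \<phi> x = 0" ..
qed

lemma pt_bound:
  fixes G W :: "real^2" and v f C :: real
  assumes v: "v > 0" and C: "C > 0" and W: "norm W \<le> C * v powr (3/2)"
  shows "norm ((sqrt v * (real (Suc k) * f^k)) *\<^sub>R G + (f^(Suc k)/(2 * sqrt v)) *\<^sub>R W)
     \<le> (real (Suc k) + C/2) * sqrt ((norm G)\<^sup>2 + v * f\<^sup>2) * (sqrt v * \<bar>f\<bar>^k)"
proof -
  define s where "s = sqrt v"
  define h where "h = sqrt ((norm G)\<^sup>2 + v * f\<^sup>2)"
  define g where "g = s * \<bar>f\<bar>^k"
  have s0: "s > 0" using v unfolding s_def by simp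
  have vs: "v = s\<^sup>2" using v unfolding s_def by simp
  have g0: "g \<ge> 0" unfolding g_def using s0 by simp
  have h0: "h \<ge> 0" unfolding h_def using v by (intro real_sqrt_ge_zero add_nonneg_nonneg) auto
  have p32: "v powr (3/2) = s^3"
  proof -
    have "v powr (3/2) = v powr (1 + 1/2)" by simp
    also have "\<dots> = v * v powr (1/2)" using v by (subst powr_add) simp
    also have "\<dots> = v * s" using v by (simp add: powr_half_sqrt s_def)
    also have "\<dots> = s^3" by (simp only: vs power3_eq_cube power2_eq_square)
    finally show ?thesis .
  qed
  have hG: "norm G \<le> h" unfolding h_def by (rule real_le_rsqrt) (use v in simp)
  have hf: "s * \<bar>f\<bar> \<le> h" unfolding h_def
    by (rule real_le_rsqrt) (simp add: vs power_mult_distrib)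
  have "norm ((sqrt v * (real (Suc k) * f^k)) *\<^sub>R G + (f^(Suc k)/(2 * sqrt v)) *\<^sub>R W)
     \<le> norm ((sqrt v * (real (Suc k) * f^k)) *\<^sub>R G) + norm ((f^(Suc k)/(2 * sqrt v)) *\<^sub>R W)"
    by (rule norm_triangle_ineq)
  also have "norm ((sqrt v * (real (Suc k) * f^k)) *\<^sub>R G) = real (Suc k) * g * norm G"
    unfolding g_def s_def using v by (simp add: abs_mult power_abs)
  also have "\<dots> \<le> real (Suc k) * g * h"
    using hG g0 by (intro mult_left_mono) auto
  also have "norm ((f^(Suc k)/(2 * sqrt v)) *\<^sub>R W) = \<bar>f\<bar>^(Suc k)/(2 * s) * norm W"
    unfolding s_def using v by (simp add: abs_mult power_abs)
  also have "\<dots> \<le> \<bar>f\<bar>^(Suc k)/(2 * s) * (C * s^3)"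
    using W p32 s0 by (intro mult_left_mono) auto
  also have "\<bar>f\<bar>^(Suc k)/(2 * s) * (C * s^3) = C/2 * (s * \<bar>f\<bar>) * g"
    unfolding g_def using s0 by (simp add: power3_eq_cube field_simps)
  also have "\<dots> \<le> C/2 * h * g"
    using hf g0 C by (intro mult_right_mono mult_left_mono) auto
  finally show ?thesis unfolding h_def[symmetric] g_def[symmetric] s_def[symmetric]
    by (simp add: algebra_simps)
qed

locale Vass =
  fixes V :: "real^2 \<Rightarrow> real" and DV :: "real^2 \<Rightarrow> real^2" and C :: real
  assumes Vder: "\<And>x. (V has_derivative (\<lambda>h. DV x \<bullet> h)) (at x)"
    and DVc: "continuous_on UNIV DV"
    and Vpos: "\<And>x. V x > 0"
    and Cpos: "C > 0"
    and DVb: "AE x in lborel. norm (DV x) \<le> C * V x powr (3/2)"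
begin

lemma Vc: "continuous_on UNIV V"
  using Vder by (meson continuous_at_imp_continuous_on has_derivative_continuous)

lemma V_meas[measurable]: "V \<in> borel_measurable borel"
  by (intro borel_measurable_continuous_onI Vc)

lemma psi_der:
  fixes \<phi> :: "real^2 \<Rightarrow> real" and D :: "real^2 \<Rightarrow> real^2"
  assumes der: "(\<phi> has_derivative (\<lambda>h. D x \<bullet> h)) (at x)"
  shows "((\<lambda>x. sqrt (V x) * \<phi> x ^ k) has_derivative
     (\<lambda>h. ((sqrt (V x) * (real k * \<phi> x ^ (k - 1))) *\<^sub>R D x + (\<phi> x ^ k / (2 * sqrt (V x))) *\<^sub>R DV x) \<bullet> h)) (at x)"
proof -
  have s: "((\<lambda>x. sqrt (V x)) has_derivative (\<lambda>h. (DV x \<bullet> h) * (inverse (sqrt (V x)) / 2))) (at x)"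
    by (rule has_derivative_real_sqrt[OF Vpos Vder])
  have p: "((\<lambda>x. \<phi> x ^ k) has_derivative (\<lambda>h. of_nat k * (D x \<bullet> h) * \<phi> x ^ (k - 1))) (at x)"
    by (rule has_derivative_power[OF der])
  show ?thesis
  proof (rule has_derivative_eq_rhs[OF has_derivative_mult[OF s p]], rule ext)
    fix h
    show "sqrt (V x) * (of_nat k * (D x \<bullet> h) * \<phi> x ^ (k - 1)) + DV x \<bullet> h * (inverse (sqrt (V x)) / 2) * \<phi> x ^ k =
      ((sqrt (V x) * (real k * \<phi> x ^ (k - 1))) *\<^sub>R D x + (\<phi> x ^ k / (2 * sqrt (V x))) *\<^sub>R DV x) \<bullet> h"
      by (simp only: inner_add_left inner_scaleR_left divide_inverse inverse_mult_distrib mult_ac)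
  qed
qed

lemma J_step:
  fixes \<phi> :: "real^2 \<Rightarrow> real"
  assumes Cc: "Cc_inf \<phi>"
  shows "(\<integral>\<^sup>+x. ennreal (V x * (\<phi> x)^(2 * Suc k)) \<partial>lborel)
    \<le> ennreal ((real (Suc k) + C/2)\<^sup>2) * (\<integral>\<^sup>+x. ennreal ((norm (grad \<phi> x))\<^sup>2 + V x * (\<phi> x)\<^sup>2) \<partial>lborel)
       * (\<integral>\<^sup>+x. ennreal (V x * (\<phi> x)^(2 * k)) \<partial>lborel)"
proof -
  note reg = Cc_inf_reg[OF Cc]
  obtain R where R: "\<And>x. norm x > R \<Longrightarrow> \<phi> x = 0" using reg(3) by blast
  have der: "\<And>x. (\<phi> has_derivative (\<lambda>h. grad \<phi> x \<bullet> h)) (at x)" by (rule reg(1))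
  have gc: "continuous_on UNIV (grad \<phi>)" by (rule reg(2))
  have phic: "continuous_on UNIV \<phi>"
    using der by (meson continuous_at_imp_continuous_on has_derivative_continuous)
  have [measurable]: "\<phi> \<in> borel_measurable borel" by (intro borel_measurable_continuous_onI phic)
  have [measurable]: "grad \<phi> \<in> borel_measurable borel" by (intro borel_measurable_continuous_onI gc)
  define \<psi> where "\<psi> x = sqrt (V x) * \<phi> x ^ Suc k" for x
  define D where "D x = (sqrt (V x) * (real (Suc k) * \<phi> x ^ k)) *\<^sub>R grad \<phi> x + (\<phi> x ^ Suc k / (2 * sqrt (V x))) *\<^sub>R DV x" for x
  have pder: "(\<psi> has_derivative (\<lambda>h. D x \<bullet> h)) (at x)" for x
    using psi_der[where x=x and k="Suc k" and D="grad \<phi>", OF der[of x]] unfolding \<psi>_def[abs_def] D_def by simp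
  have sVc: "continuous_on UNIV (\<lambda>x. sqrt (V x))" by (intro continuous_intros Vc)
  have Dc: "continuous_on UNIV D"
    unfolding D_def
    by (intro continuous_intros sVc phic gc DVc Vc) (use Vpos in \<open>auto simp: less_imp_neq[symmetric]\<close>)
  have psupp: "\<psi> x = 0" if "norm x > R" for x
    using R[OF that] unfolding \<psi>_def by simp
  have gn: "(\<integral>\<^sup>+x. ennreal ((\<psi> x)\<^sup>2) \<partial>lborel) \<le> (\<integral>\<^sup>+x. ennreal (norm (D x)) \<partial>lborel)\<^sup>2"
    by (rule gn2d[where R=R, OF pder Dc psupp])
  have psq: "(\<psi> x)\<^sup>2 = V x * (\<phi> x)^(2 * Suc k)" for x
  proof -
    have "(\<psi> x)\<^sup>2 = (sqrt (V x))\<^sup>2 * (\<phi> x ^ Suc k)\<^sup>2" unfolding \<psi>_def by (rule power_mult_distrib)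
    also have "(\<phi> x ^ Suc k)\<^sup>2 = \<phi> x ^ (2 * Suc k)" by (simp only: power_mult[symmetric] mult.commute)
    finally show ?thesis using Vpos[of x] by simp
  qed
  define hh where "hh x = sqrt ((norm (grad \<phi> x))\<^sup>2 + V x * (\<phi> x)\<^sup>2)" for x
  define gg where "gg x = sqrt (V x) * \<bar>\<phi> x\<bar>^k" for x
  have [measurable]: "hh \<in> borel_measurable borel" "gg \<in> borel_measurable borel"
    unfolding hh_def[abs_def] gg_def[abs_def] by measurable
  have ptw: "AE x in lborel. norm (D x) \<le> (real (Suc k) + C/2) * hh x * gg x"
    using DVb
  proof eventually_elim
    case (elim x)
    show ?case unfolding D_def hh_def gg_def by (rule pt_bound[OF Vpos Cpos elim])
  qed
  have "(\<integral>\<^sup>+x. ennreal (norm (D x)) \<partial>lborel) \<le> (\<integral>\<^sup>+x. ennreal (real (Suc k) + C/2) * (ennreal (hh x) * ennreal (gg x)) \<partial>lborel)"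
  proof (rule nn_integral_mono_AE)
    show "AE x in lborel. ennreal (norm (D x)) \<le> ennreal (real (Suc k) + C/2) * (ennreal (hh x) * ennreal (gg x))"
      using ptw
    proof eventually_elim
      case (elim x)
      have "hh x \<ge> 0" "gg x \<ge> 0" unfolding hh_def gg_def using Vpos[of x]
        by (auto intro!: add_nonneg_nonneg)
      moreover have c0: "0 \<le> real (Suc k) + C/2" using Cpos by simp
      ultimately have hg0: "0 \<le> hh x * gg x" by simp
      have "ennreal (norm (D x)) \<le> ennreal ((real (Suc k) + C/2) * (hh x * gg x))"
        using elim by (intro ennreal_leI) (simp only: mult.assoc)
      also have "\<dots> = ennreal (real (Suc k) + C/2) * (ennreal (hh x) * ennreal (gg x))"
        using c0 hg0 \<open>hh x \<ge> 0\<close> \<open>gg x \<ge> 0\<close> by (simp only: ennreal_mult)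
      finally show ?case .
    qed
  qed
  also have "\<dots> = ennreal (real (Suc k) + C/2) * (\<integral>\<^sup>+x. ennreal (hh x) * ennreal (gg x) \<partial>lborel)"
    by (rule nn_integral_cmult) measurable
  finally have i1: "(\<integral>\<^sup>+x. ennreal (norm (D x)) \<partial>lborel) \<le> ennreal (real (Suc k) + C/2) * (\<integral>\<^sup>+x. ennreal (hh x) * ennreal (gg x) \<partial>lborel)" .
  have cs: "(\<integral>\<^sup>+x. ennreal (hh x) * ennreal (gg x) \<partial>lborel)\<^sup>2 \<le> (\<integral>\<^sup>+x. ennreal (hh x) ^ 2 \<partial>lborel) * (\<integral>\<^sup>+x. ennreal (gg x) ^ 2 \<partial>lborel)"
    by (rule Cauchy_Schwarz_nn_integral) measurable
  have e1: "ennreal (hh x) ^ 2 = ennreal ((norm (grad \<phi> x))\<^sup>2 + V x * (\<phi> x)\<^sup>2)" for x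
  proof -
    have "(norm (grad \<phi> x))\<^sup>2 + V x * (\<phi> x)\<^sup>2 \<ge> 0" using Vpos[of x] by (intro add_nonneg_nonneg) auto
    then show ?thesis unfolding hh_def by (subst ennreal_power) simp_all
  qed
  have e2: "ennreal (gg x) ^ 2 = ennreal (V x * (\<phi> x)^(2 * k))" for x
  proof -
    have "(gg x)\<^sup>2 = (sqrt (V x))\<^sup>2 * (\<bar>\<phi> x\<bar>^k)\<^sup>2" unfolding gg_def by (rule power_mult_distrib)
    also have "(\<bar>\<phi> x\<bar>^k)\<^sup>2 = \<bar>\<phi> x\<bar>^(2 * k)" by (simp only: power_mult[symmetric] mult.commute)
    also have "\<bar>\<phi> x\<bar>^(2 * k) = (\<phi> x)^(2 * k)" by (rule power_even_abs) simp
    finally have "(gg x)\<^sup>2 = V x * (\<phi> x)^(2 * k)" using Vpos[of x] by simp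
    moreover have "gg x \<ge> 0" unfolding gg_def using Vpos[of x] by simp
    ultimately show ?thesis by (subst ennreal_power) simp_all
  qed
  have "(\<integral>\<^sup>+x. ennreal (V x * (\<phi> x)^(2 * Suc k)) \<partial>lborel) = (\<integral>\<^sup>+x. ennreal ((\<psi> x)\<^sup>2) \<partial>lborel)"
    by (simp add: psq)
  also have "\<dots> \<le> (\<integral>\<^sup>+x. ennreal (norm (D x)) \<partial>lborel)\<^sup>2" by (rule gn)
  also have "\<dots> \<le> (ennreal (real (Suc k) + C/2) * (\<integral>\<^sup>+x. ennreal (hh x) * ennreal (gg x) \<partial>lborel))\<^sup>2"
    by (rule power_mono[OF i1]) simp
  also have "\<dots> = ennreal ((real (Suc k) + C/2)\<^sup>2) * (\<integral>\<^sup>+x. ennreal (hh x) * ennreal (gg x) \<partial>lborel)\<^sup>2"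
    using ennreal_power[of "real (Suc k) + C/2" 2] Cpos by (simp only: power_mult_distrib)
  also have "\<dots> \<le> ennreal ((real (Suc k) + C/2)\<^sup>2) * ((\<integral>\<^sup>+x. ennreal (hh x) ^ 2 \<partial>lborel) * (\<integral>\<^sup>+x. ennreal (gg x) ^ 2 \<partial>lborel))"
    by (rule mult_left_mono[OF cs]) simp
  also have "\<dots> = ennreal ((real (Suc k) + C/2)\<^sup>2) * (\<integral>\<^sup>+x. ennreal ((norm (grad \<phi> x))\<^sup>2 + V x * (\<phi> x)\<^sup>2) \<partial>lborel)
       * (\<integral>\<^sup>+x. ennreal (V x * (\<phi> x)^(2 * k)) \<partial>lborel)"
    by (simp add: e1 e2 mult.assoc)
  finally show ?thesis .
qed

end

lemma grad_zero_outside: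
  fixes \<phi> :: "real^2 \<Rightarrow> real"
  assumes Cc: "Cc_inf \<phi>" and R: "\<And>y. norm y > R \<Longrightarrow> \<phi> y = 0" and x: "norm x > R"
  shows "grad \<phi> x = 0"
proof -
  have d1: "(\<phi> has_derivative (\<lambda>h. grad \<phi> x \<bullet> h)) (at x)" by (rule Cc_inf_reg(1)[OF Cc])
  have o: "open {y::real^2. norm y > R}" by (intro open_Collect_less continuous_intros)
  have "((\<lambda>_. 0::real) has_derivative (\<lambda>h. 0)) (at x)" by simp
  then have d2: "(\<phi> has_derivative (\<lambda>h. 0)) (at x)"
    by (rule has_derivative_transform_within_open[OF _ o]) (use x R in auto)
  have "(\<lambda>h. grad \<phi> x \<bullet> h) = (\<lambda>h. 0)" by (rule has_derivative_unique[OF d1 d2])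
  then have "grad \<phi> x \<bullet> grad \<phi> x = 0" by metis
  then show ?thesis by simp
qed

lemma (in Vass) Nphi_finite:
  fixes \<phi> :: "real^2 \<Rightarrow> real"
  assumes Cc: "Cc_inf \<phi>"
  shows "(\<integral>\<^sup>+x. ennreal ((norm (grad \<phi> x))\<^sup>2 + V x * (\<phi> x)\<^sup>2) \<partial>lborel) < \<infinity>"
proof -
  obtain R where R: "\<And>x. norm x > R \<Longrightarrow> \<phi> x = 0" using Cc_inf_reg(3)[OF Cc] by blast
  have der: "\<And>x. (\<phi> has_derivative (\<lambda>h. grad \<phi> x \<bullet> h)) (at x)" by (rule Cc_inf_reg(1)[OF Cc])
  have gc: "continuous_on UNIV (grad \<phi>)" by (rule Cc_inf_reg(2)[OF Cc])
  have phic: "continuous_on UNIV \<phi>"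
    using der by (meson continuous_at_imp_continuous_on has_derivative_continuous)
  define f where "f x = (norm (grad \<phi> x))\<^sup>2 + V x * (\<phi> x)\<^sup>2" for x
  have fc: "continuous_on (cball 0 \<bar>R\<bar>) f" unfolding f_def
    by (intro continuous_intros continuous_on_subset[OF gc] continuous_on_subset[OF phic] continuous_on_subset[OF Vc]) auto
  have int: "integrable lborel (\<lambda>x. indicator (cball 0 \<bar>R\<bar>) x *\<^sub>R f x)"
    by (rule borel_integrable_compact[OF compact_cball fc])
  have eq: "indicator (cball 0 \<bar>R\<bar>) x *\<^sub>R f x = f x" for x
  proof (cases "norm x > R")
    case True
    then show ?thesis using R[OF True] grad_zero_outside[OF Cc R True] unfolding f_def by simp
  next
    case False
    then show ?thesis by (auto simp: indicator_def)
  qed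
  have int2: "integrable lborel f" using int unfolding eq .
  have "(\<integral>\<^sup>+x. ennreal (f x) \<partial>lborel) = ennreal (integral\<^sup>L lborel f)"
  proof (rule nn_integral_eq_integral[OF int2], rule AE_I2)
    fix x show "0 \<le> f x" unfolding f_def using Vpos[of x] by (intro add_nonneg_nonneg) auto
  qed
  then show ?thesis unfolding f_def by simp
qed

lemma (in Vass) J_bound:
  assumes "m \<ge> 1"
  shows "\<exists>K\<ge>0. \<forall>\<phi>. Cc_inf \<phi> \<longrightarrow> (\<integral>\<^sup>+x. ennreal (V x * (\<phi> x)^(2 * m)) \<partial>lborel)
       \<le> ennreal K * (\<integral>\<^sup>+x. ennreal ((norm (grad \<phi> x))\<^sup>2 + V x * (\<phi> x)\<^sup>2) \<partial>lborel) ^ m"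
  using assms
proof (induction m rule: dec_induct)
  case base
  show ?case
  proof (intro exI[of _ 1] conjI allI impI)
    fix \<phi> :: "real^2 \<Rightarrow> real"
    show "(\<integral>\<^sup>+x. ennreal (V x * (\<phi> x)^(2 * 1)) \<partial>lborel)
       \<le> ennreal 1 * (\<integral>\<^sup>+x. ennreal ((norm (grad \<phi> x))\<^sup>2 + V x * (\<phi> x)\<^sup>2) \<partial>lborel) ^ 1"
      by (simp, intro nn_integral_mono ennreal_leI) (simp add: power2_eq_square)
  qed simp
next
  case (step m)
  then obtain K where K: "K \<ge> 0" "\<And>\<phi>. Cc_inf \<phi> \<Longrightarrow> (\<integral>\<^sup>+x. ennreal (V x * (\<phi> x)^(2 * m)) \<partial>lborel)
       \<le> ennreal K * (\<integral>\<^sup>+x. ennreal ((norm (grad \<phi> x))\<^sup>2 + V x * (\<phi> x)\<^sup>2) \<partial>lborel) ^ m" by blast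
  show ?case
  proof (intro exI[of _ "(real (Suc m) + C/2)\<^sup>2 * K"] conjI allI impI)
    show "0 \<le> (real (Suc m) + C/2)\<^sup>2 * K" using K(1) by simp
    fix \<phi> :: "real^2 \<Rightarrow> real"
    assume Cc: "Cc_inf \<phi>"
    define N where "N = (\<integral>\<^sup>+x. ennreal ((norm (grad \<phi> x))\<^sup>2 + V x * (\<phi> x)\<^sup>2) \<partial>lborel)"
    have "(\<integral>\<^sup>+x. ennreal (V x * (\<phi> x)^(2 * Suc m)) \<partial>lborel)
        \<le> ennreal ((real (Suc m) + C/2)\<^sup>2) * N * (\<integral>\<^sup>+x. ennreal (V x * (\<phi> x)^(2 * m)) \<partial>lborel)"
      unfolding N_def by (rule J_step[OF Cc])
    also have "\<dots> \<le> ennreal ((real (Suc m) + C/2)\<^sup>2) * N * (ennreal K * N ^ m)"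
      using K(2)[OF Cc] unfolding N_def[symmetric] by (intro mult_left_mono) auto
    also have "\<dots> = ennreal ((real (Suc m) + C/2)\<^sup>2 * K) * N ^ Suc m"
      using K(1) by (simp add: ennreal_mult mult_ac)
    finally show "(\<integral>\<^sup>+x. ennreal (V x * (\<phi> x)^(2 * Suc m)) \<partial>lborel)
       \<le> ennreal ((real (Suc m) + C/2)\<^sup>2 * K) * (\<integral>\<^sup>+x. ennreal ((norm (grad \<phi> x))\<^sup>2 + V x * (\<phi> x)\<^sup>2) \<partial>lborel) ^ Suc m"
      unfolding N_def .
  qed
qed

lemma nn_AE_subseq:
  fixes f :: "nat \<Rightarrow> 'a \<Rightarrow> real"
  assumes [measurable]: "\<And>n. f n \<in> borel_measurable M" and nn: "\<And>n x. f n x \<ge> 0"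
    and lim: "(\<lambda>n. \<integral>\<^sup>+x. ennreal (f n x) \<partial>M) \<longlonglongrightarrow> 0"
  shows "\<exists>r. strict_mono r \<and> (AE x in M. (\<lambda>n. f (r n) x) \<longlonglongrightarrow> 0)"
proof -
  have "eventually (\<lambda>n. (\<integral>\<^sup>+x. ennreal (f n x) \<partial>M) < 1) sequentially"
    using order_tendstoD(2)[OF lim] by simp
  then obtain n0 where n0: "\<And>n. n \<ge> n0 \<Longrightarrow> (\<integral>\<^sup>+x. ennreal (f n x) \<partial>M) < 1"
    unfolding eventually_sequentially by blast
  define u where "u n = f (n + n0)" for n
  have [measurable]: "u n \<in> borel_measurable M" for n unfolding u_def by simp
  have int: "integrable M (u n)" for n
  proof (rule integrableI_bounded)
    have "(\<integral>\<^sup>+x. ennreal (norm (u n x)) \<partial>M) = (\<integral>\<^sup>+x. ennreal (f (n + n0) x) \<partial>M)"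
      unfolding u_def using nn by simp
    also have "\<dots> < 1" by (rule n0) simp
    also have "(1::ennreal) < \<infinity>" by simp
    finally show "(\<integral>\<^sup>+x. ennreal (norm (u n x)) \<partial>M) < \<infinity>" .
  qed simp
  have eqi: "(\<integral>x. norm (u n x) \<partial>M) = enn2real (\<integral>\<^sup>+x. ennreal (f (n + n0) x) \<partial>M)" for n
    unfolding u_def using nn by (subst integral_eq_nn_integral) auto
  have lim2: "(\<lambda>n. \<integral>\<^sup>+x. ennreal (f (n + n0) x) \<partial>M) \<longlonglongrightarrow> ennreal 0"
    using LIMSEQ_ignore_initial_segment[OF lim, of n0] by simp
  have "(\<lambda>n. (\<integral>x. norm (u n x) \<partial>M)) \<longlonglongrightarrow> 0"
    unfolding eqi using tendsto_enn2real[OF lim2] by simp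
  from tendsto_L1_AE_subseq[OF int this]
  obtain r where r: "strict_mono r" "AE x in M. (\<lambda>n. u (r n) x) \<longlonglongrightarrow> 0" by blast
  show ?thesis
  proof (intro exI[of _ "\<lambda>n. r n + n0"] conjI)
    show "strict_mono (\<lambda>n. r n + n0)" using r(1) by (simp add: strict_mono_def)
    show "AE x in M. (\<lambda>n. f (r n + n0) x) \<longlonglongrightarrow> 0" using r(2) unfolding u_def .
  qed
qed

lemma sq_sum: fixes x y :: real shows "(x + y)\<^sup>2 \<le> 2 * x\<^sup>2 + 2 * y\<^sup>2"
proof -
  have e: "(x + y)\<^sup>2 + (x - y)\<^sup>2 = 2 * x\<^sup>2 + 2 * y\<^sup>2" by algebra
  have "0 \<le> (x - y)\<^sup>2" by simp
  with e show ?thesis by linarith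
qed

lemma sq_tri: "(norm (a::'a::real_normed_vector))\<^sup>2 \<le> 2 * (norm (a - b))\<^sup>2 + 2 * (norm b)\<^sup>2"
proof -
  have "norm ((a - b) + b) \<le> norm (a - b) + norm b" by (rule norm_triangle_ineq)
  then have "norm a \<le> norm (a - b) + norm b" by simp
  then have "(norm a)\<^sup>2 \<le> (norm (a - b) + norm b)\<^sup>2" by (rule power_mono) simp
  also have "\<dots> \<le> 2 * (norm (a - b))\<^sup>2 + 2 * (norm b)\<^sup>2" by (rule sq_sum)
  finally show ?thesis .
qed

lemma nn_2sum:
  assumes [measurable]: "A \<in> borel_measurable M" "B \<in> borel_measurable M"
    and "\<And>x. A x \<ge> 0" "\<And>x. B x \<ge> 0"
  shows "(\<integral>\<^sup>+x. ennreal (2 * A x + 2 * B x) \<partial>M) = 2 * (\<integral>\<^sup>+x. ennreal (A x) \<partial>M) + 2 * (\<integral>\<^sup>+x. ennreal (B x) \<partial>M)"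
proof -
  have "(\<integral>\<^sup>+x. ennreal (2 * A x + 2 * B x) \<partial>M) = (\<integral>\<^sup>+x. 2 * ennreal (A x) + 2 * ennreal (B x) \<partial>M)"
    using assms(3,4) by (intro nn_integral_cong) (simp add: ennreal_plus[symmetric] ennreal_mult)
  also have "\<dots> = (\<integral>\<^sup>+x. 2 * ennreal (A x) \<partial>M) + (\<integral>\<^sup>+x. 2 * ennreal (B x) \<partial>M)"
    by (rule nn_integral_add) auto
  also have "\<dots> = 2 * (\<integral>\<^sup>+x. ennreal (A x) \<partial>M) + 2 * (\<integral>\<^sup>+x. ennreal (B x) \<partial>M)"
    by (simp add: nn_integral_cmult)
  finally show ?thesis .
qed

lemma fin2: "(a::ennreal) < \<infinity> \<Longrightarrow> b < \<infinity> \<Longrightarrow> 2 * a + 2 * b < \<infinity>"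
  by (auto simp: ennreal_mult_less_top)

lemma sq_tri_real: "(a::real)\<^sup>2 \<le> 2 * (a - b)\<^sup>2 + 2 * b\<^sup>2"
  using sq_tri[of a b] by simp

context Vass
begin

lemma V_ge0[simp]: "0 \<le> V x" using Vpos[of x] by simp
lemma V_sq_ge0[simp]: "0 \<le> V x * (t::real)\<^sup>2" by simp

lemma pt_N:
  fixes a b :: "real^2" and s t :: real
  shows "(norm a)\<^sup>2 + V x * s\<^sup>2 \<le> 2 * ((norm (a - b))\<^sup>2 + V x * (s - t)\<^sup>2) + 2 * ((norm b)\<^sup>2 + V x * t\<^sup>2)"
proof -
  have "V x * s\<^sup>2 \<le> V x * (2 * (s - t)\<^sup>2 + 2 * t\<^sup>2)"
    using Vpos[of x] sq_tri_real[of s t] by (intro mult_left_mono) auto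
  then show ?thesis using sq_tri[of a b] by (simp add: algebra_simps)
qed

lemma H1V_setup:
  assumes H: "H1V V u g"
  obtains \<phi> where "\<And>n. Cc_inf (\<phi> n)"
    "(\<lambda>n. \<integral>\<^sup>+ x. ennreal ((norm (grad (\<phi> n) x - g x))\<^sup>2 + V x * (\<phi> n x - u x)\<^sup>2) \<partial>lborel) \<longlonglongrightarrow> 0"
  using H unfolding H1V_def by blast

lemma grad_meas[measurable]: "Cc_inf \<phi> \<Longrightarrow> grad \<phi> \<in> borel_measurable borel"
  by (intro borel_measurable_continuous_onI Cc_inf_reg(2))

lemma phi_meas[measurable]: "Cc_inf \<phi> \<Longrightarrow> \<phi> \<in> borel_measurable borel"
  using Cc_inf_reg(1) by (meson borel_measurable_continuous_onI continuous_at_imp_continuous_on has_derivative_continuous)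

lemma N_compare:
  fixes \<phi> :: "real^2 \<Rightarrow> real" and u :: "real^2 \<Rightarrow> real" and g :: "real^2 \<Rightarrow> real^2"
  assumes [measurable]: "\<phi> \<in> borel_measurable borel" "u \<in> borel_measurable borel"
    "a \<in> borel_measurable borel" "g \<in> borel_measurable borel"
  shows "(\<integral>\<^sup>+x. ennreal ((norm (a x))\<^sup>2 + V x * (\<phi> x)\<^sup>2) \<partial>lborel)
    \<le> 2 * (\<integral>\<^sup>+x. ennreal ((norm (a x - g x))\<^sup>2 + V x * (\<phi> x - u x)\<^sup>2) \<partial>lborel)
      + 2 * (\<integral>\<^sup>+x. ennreal ((norm (g x))\<^sup>2 + V x * (u x)\<^sup>2) \<partial>lborel)"
proof -
  have "(\<integral>\<^sup>+x. ennreal ((norm (a x))\<^sup>2 + V x * (\<phi> x)\<^sup>2) \<partial>lborel)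
     \<le> (\<integral>\<^sup>+x. ennreal (2 * ((norm (a x - g x))\<^sup>2 + V x * (\<phi> x - u x)\<^sup>2) + 2 * ((norm (g x))\<^sup>2 + V x * (u x)\<^sup>2)) \<partial>lborel)"
    by (intro nn_integral_mono ennreal_leI pt_N)
  also have "\<dots> = 2 * (\<integral>\<^sup>+x. ennreal ((norm (a x - g x))\<^sup>2 + V x * (\<phi> x - u x)\<^sup>2) \<partial>lborel)
      + 2 * (\<integral>\<^sup>+x. ennreal ((norm (g x))\<^sup>2 + V x * (u x)\<^sup>2) \<partial>lborel)"
    by (rule nn_2sum) (auto intro!: add_nonneg_nonneg)
  finally show ?thesis .
qed

lemma H1V_meas:
  assumes H: "H1V V u g"
  shows "u \<in> borel_measurable borel" "g \<in> borel_measurable borel"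
  using H unfolding H1V_def by auto

lemma H1V_N_finite:
  assumes H: "H1V V u g"
  shows "(\<integral>\<^sup>+x. ennreal ((norm (g x))\<^sup>2 + V x * (u x)\<^sup>2) \<partial>lborel) < \<infinity>"
proof -
  note [measurable] = H1V_meas[OF H]
  obtain \<phi> where Cc: "\<And>n. Cc_inf (\<phi> n)" and
    lim: "(\<lambda>n. \<integral>\<^sup>+ x. ennreal ((norm (grad (\<phi> n) x - g x))\<^sup>2 + V x * (\<phi> n x - u x)\<^sup>2) \<partial>lborel) \<longlonglongrightarrow> 0"
    using H1V_setup[OF H] by blast
  have "eventually (\<lambda>n. (\<integral>\<^sup>+ x. ennreal ((norm (grad (\<phi> n) x - g x))\<^sup>2 + V x * (\<phi> n x - u x)\<^sup>2) \<partial>lborel) < 1) sequentially"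
    using order_tendstoD(2)[OF lim] by simp
  then obtain n0 where n0: "\<forall>n\<ge>n0. (\<integral>\<^sup>+ x. ennreal ((norm (grad (\<phi> n) x - g x))\<^sup>2 + V x * (\<phi> n x - u x)\<^sup>2) \<partial>lborel) < 1"
    unfolding eventually_sequentially by blast
  define n where "n = n0"
  have n: "(\<integral>\<^sup>+ x. ennreal ((norm (grad (\<phi> n) x - g x))\<^sup>2 + V x * (\<phi> n x - u x)\<^sup>2) \<partial>lborel) < 1"
    using n0 unfolding n_def by blast
  note [measurable] = phi_meas[OF Cc[of n]] grad_meas[OF Cc[of n]]
  have "(\<integral>\<^sup>+x. ennreal ((norm (g x))\<^sup>2 + V x * (u x)\<^sup>2) \<partial>lborel)
     \<le> 2 * (\<integral>\<^sup>+x. ennreal ((norm (g x - grad (\<phi> n) x))\<^sup>2 + V x * (u x - \<phi> n x)\<^sup>2) \<partial>lborel)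
      + 2 * (\<integral>\<^sup>+x. ennreal ((norm (grad (\<phi> n) x))\<^sup>2 + V x * (\<phi> n x)\<^sup>2) \<partial>lborel)"
    by (rule N_compare) measurable
  also have "(\<integral>\<^sup>+x. ennreal ((norm (g x - grad (\<phi> n) x))\<^sup>2 + V x * (u x - \<phi> n x)\<^sup>2) \<partial>lborel)
     = (\<integral>\<^sup>+ x. ennreal ((norm (grad (\<phi> n) x - g x))\<^sup>2 + V x * (\<phi> n x - u x)\<^sup>2) \<partial>lborel)"
    by (simp add: norm_minus_commute power2_commute)
  also have "2 * (\<integral>\<^sup>+ x. ennreal ((norm (grad (\<phi> n) x - g x))\<^sup>2 + V x * (\<phi> n x - u x)\<^sup>2) \<partial>lborel)
      + 2 * (\<integral>\<^sup>+x. ennreal ((norm (grad (\<phi> n) x))\<^sup>2 + V x * (\<phi> n x)\<^sup>2) \<partial>lborel) < \<infinity>"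
    by (rule fin2[OF less_trans[OF n] Nphi_finite[OF Cc[of n]]]) simp
  finally show ?thesis .
qed

lemma H1V_J:
  assumes H: "H1V V u g" and K: "\<And>\<phi>. Cc_inf \<phi> \<Longrightarrow> (\<integral>\<^sup>+x. ennreal (V x * (\<phi> x)^(2 * m)) \<partial>lborel)
       \<le> ennreal K * (\<integral>\<^sup>+x. ennreal ((norm (grad \<phi> x))\<^sup>2 + V x * (\<phi> x)\<^sup>2) \<partial>lborel) ^ m"
    and Npos: "0 < (\<integral>\<^sup>+x. ennreal ((norm (g x))\<^sup>2 + V x * (u x)\<^sup>2) \<partial>lborel)"
  shows "(\<integral>\<^sup>+x. ennreal (V x * (u x)^(2 * m)) \<partial>lborel)
    \<le> ennreal K * (3 * (\<integral>\<^sup>+x. ennreal ((norm (g x))\<^sup>2 + V x * (u x)\<^sup>2) \<partial>lborel)) ^ m"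
proof -
  note [measurable] = H1V_meas[OF H]
  define N where "N = (\<integral>\<^sup>+x. ennreal ((norm (g x))\<^sup>2 + V x * (u x)\<^sup>2) \<partial>lborel)"
  obtain \<phi> where Cc: "\<And>n. Cc_inf (\<phi> n)" and
    lim: "(\<lambda>n. \<integral>\<^sup>+ x. ennreal ((norm (grad (\<phi> n) x - g x))\<^sup>2 + V x * (\<phi> n x - u x)\<^sup>2) \<partial>lborel) \<longlonglongrightarrow> 0"
    using H1V_setup[OF H] by blast
  define d where "d n = (\<integral>\<^sup>+ x. ennreal ((norm (grad (\<phi> n) x - g x))\<^sup>2 + V x * (\<phi> n x - u x)\<^sup>2) \<partial>lborel)" for n
  define Np where "Np n = (\<integral>\<^sup>+x. ennreal ((norm (grad (\<phi> n) x))\<^sup>2 + V x * (\<phi> n x)\<^sup>2) \<partial>lborel)" for n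
  have [measurable]: "\<phi> n \<in> borel_measurable borel" "grad (\<phi> n) \<in> borel_measurable borel" for n
    using phi_meas[OF Cc[of n]] grad_meas[OF Cc[of n]] .
  have Npd: "Np n \<le> 2 * d n + 2 * N" for n
    unfolding Np_def d_def N_def by (rule N_compare) measurable
  define w where "w n x = V x * (\<phi> n x - u x)\<^sup>2" for n x
  have [measurable]: "w n \<in> borel_measurable lborel" for n unfolding w_def by measurable
  have wd: "(\<integral>\<^sup>+x. ennreal (w n x) \<partial>lborel) \<le> d n" for n
    unfolding w_def d_def by (intro nn_integral_mono ennreal_leI) simp
  have wlim: "(\<lambda>n. \<integral>\<^sup>+x. ennreal (w n x) \<partial>lborel) \<longlonglongrightarrow> 0"
    by (rule tendsto_sandwich[OF _ _ tendsto_const lim[folded d_def]]) (auto intro!: always_eventually wd)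
  have "\<exists>r. strict_mono r \<and> (AE x in lborel. (\<lambda>n. w (r n) x) \<longlonglongrightarrow> 0)"
    by (rule nn_AE_subseq[OF _ _ wlim]) (simp, simp add: w_def)
  then obtain r where r: "strict_mono r" and ae: "AE x in lborel. (\<lambda>n. w (r n) x) \<longlonglongrightarrow> 0"
    by blast
  have ae2: "AE x in lborel. (\<lambda>n. ennreal (V x * (\<phi> (r n) x)^(2 * m))) \<longlonglongrightarrow> ennreal (V x * (u x)^(2 * m))"
    using ae
  proof eventually_elim
    case (elim x)
    have "(\<lambda>n. w (r n) x / V x) \<longlonglongrightarrow> 0 / V x" by (intro tendsto_divide elim tendsto_const) (use Vpos[of x] in auto)
    then have "(\<lambda>n. (\<phi> (r n) x - u x)\<^sup>2) \<longlonglongrightarrow> 0" unfolding w_def using Vpos[of x] by simp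
    then have "(\<lambda>n. sqrt ((\<phi> (r n) x - u x)\<^sup>2)) \<longlonglongrightarrow> sqrt 0" by (rule tendsto_real_sqrt)
    then have "(\<lambda>n. \<bar>\<phi> (r n) x - u x\<bar>) \<longlonglongrightarrow> 0" by simp
    then have "(\<lambda>n. \<phi> (r n) x - u x) \<longlonglongrightarrow> 0" by (rule tendsto_rabs_zero_cancel)
    then have "(\<lambda>n. \<phi> (r n) x) \<longlonglongrightarrow> u x" by (simp add: LIM_zero_iff)
    then show ?case by (intro tendsto_ennrealI tendsto_intros)
  qed
  have "(\<integral>\<^sup>+x. ennreal (V x * (u x)^(2 * m)) \<partial>lborel) = (\<integral>\<^sup>+x. liminf (\<lambda>n. ennreal (V x * (\<phi> (r n) x)^(2 * m))) \<partial>lborel)"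
  proof (rule nn_integral_cong_AE)
    show "AE x in lborel. ennreal (V x * (u x)^(2 * m)) = liminf (\<lambda>n. ennreal (V x * (\<phi> (r n) x)^(2 * m)))"
      using ae2
    proof eventually_elim
      case (elim x)
      show ?case by (rule lim_imp_Liminf[OF _ elim, symmetric]) simp
    qed
  qed
  also have "\<dots> \<le> liminf (\<lambda>n. \<integral>\<^sup>+x. ennreal (V x * (\<phi> (r n) x)^(2 * m)) \<partial>lborel)"
    by (rule nn_integral_liminf) measurable
  also have "\<dots> \<le> limsup (\<lambda>n. \<integral>\<^sup>+x. ennreal (V x * (\<phi> (r n) x)^(2 * m)) \<partial>lborel)"
    by (rule Liminf_le_Limsup) simp
  also have "\<dots> \<le> ennreal K * (3 * N) ^ m"
  proof (rule Limsup_bounded)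
    have "(d \<circ> r) \<longlonglongrightarrow> 0" using LIMSEQ_subseq_LIMSEQ[OF lim[folded d_def] r] .
    then have d2: "(\<lambda>n. 2 * d (r n)) \<longlonglongrightarrow> 2 * 0" by (intro ennreal_tendsto_cmult) (simp_all add: comp_def)
    have "eventually (\<lambda>n. 2 * d (r n) < N) sequentially"
      using order_tendstoD(2)[OF d2, of N] Npos unfolding N_def by simp
    then show "eventually (\<lambda>n. (\<integral>\<^sup>+x. ennreal (V x * (\<phi> (r n) x)^(2 * m)) \<partial>lborel) \<le> ennreal K * (3 * N) ^ m) sequentially"
    proof eventually_elim
      case (elim n)
      have "Np (r n) \<le> 2 * d (r n) + 2 * N" by (rule Npd)
      also have "\<dots> \<le> N + 2 * N" using elim by (intro add_right_mono) simp
      also have "\<dots> = 3 * N" using distrib_right[of "1::ennreal" 2 N] by simp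
      finally have "Np (r n) \<le> 3 * N" .
      have "(\<integral>\<^sup>+x. ennreal (V x * (\<phi> (r n) x)^(2 * m)) \<partial>lborel) \<le> ennreal K * Np (r n) ^ m"
        unfolding Np_def by (rule K[OF Cc])
      also have "\<dots> \<le> ennreal K * (3 * N) ^ m"
        by (intro mult_left_mono power_mono \<open>Np (r n) \<le> 3 * N\<close>) auto
      finally show ?case .
    qed
  qed
  finally show ?thesis unfolding N_def .
qed

end

lemma powr_split:
  fixes t p :: real and m :: nat
  assumes p: "p > 1" and m: "real (2 * m) \<ge> p + 1"
  shows "\<bar>t\<bar> powr (p + 1) \<le> t\<^sup>2 + t ^ (2 * m)"
proof (cases "t = 0")
  case True then show ?thesis by simp
next
  case False
  then have t0: "\<bar>t\<bar> > 0" by simp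
  have e2: "t ^ (2 * m) = \<bar>t\<bar> ^ (2 * m)" by (simp add: power_even_abs)
  show ?thesis
  proof (cases "\<bar>t\<bar> \<le> 1")
    case True
    have "\<bar>t\<bar> powr (p + 1) \<le> \<bar>t\<bar> powr (real 2)"
      by (rule powr_mono') (use p True in auto)
    also have "\<dots> = t\<^sup>2" using t0 by (subst powr_realpow) auto
    finally show ?thesis using zero_le_power[of "\<bar>t\<bar>" "2 * m"] unfolding e2 by linarith
  next
    case False
    have "\<bar>t\<bar> powr (p + 1) \<le> \<bar>t\<bar> powr (real (2 * m))"
      by (rule powr_mono) (use m False in auto)
    also have "\<dots> = t ^ (2 * m)" unfolding e2 using t0 by (rule powr_realpow)
    finally show ?thesis using zero_le_power2[of t] by linarith
  qed
qed

lemma V_lower: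
  fixes V :: "real^2 \<Rightarrow> real"
  assumes Vc: "continuous_on UNIV V" and Vpos: "\<And>x. V x > 0" and coer: "filterlim V at_top at_infinity"
  shows "\<exists>v0>0. \<forall>x. V x \<ge> v0"
proof -
  have "eventually (\<lambda>x. 1 \<le> V x) at_infinity" using coer[unfolded filterlim_at_top] by (rule spec)
  then have "\<exists>b. \<forall>x. b \<le> norm x \<longrightarrow> 1 \<le> V x" by (simp only: eventually_at_infinity)
  then obtain b where b0: "\<forall>x. b \<le> norm x \<longrightarrow> 1 \<le> V x" by (erule exE)
  have b: "V x \<ge> 1" if "b \<le> norm x" for x using b0 that by simp
  have "compact (cball (0::real^2) \<bar>b\<bar>)" by simp
  moreover have "cball (0::real^2) \<bar>b\<bar> \<noteq> {}" by simp
  moreover have "continuous_on (cball 0 \<bar>b\<bar>) V" using Vc by (rule continuous_on_subset) simp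
  ultimately have "\<exists>x\<in>cball 0 \<bar>b\<bar>. \<forall>y\<in>cball 0 \<bar>b\<bar>. V x \<le> V y"
    by (rule continuous_attains_inf)
  then obtain x0 where x00: "\<forall>y\<in>cball 0 \<bar>b\<bar>. V x0 \<le> V y" by auto
  have x0: "V x0 \<le> V y" if "y \<in> cball 0 \<bar>b\<bar>" for y using x00 that by simp
  show ?thesis
  proof (intro exI[of _ "min 1 (V x0)"] conjI allI)
    show "min 1 (V x0) > 0" using Vpos[of x0] by simp
    fix x
    show "min 1 (V x0) \<le> V x"
    proof (cases "norm x \<le> \<bar>b\<bar>")
      case True then have "V x0 \<le> V x" by (intro x0) simp
      then show ?thesis by simp
    next
      case False then have "V x \<ge> 1" by (intro b) simp
      then show ?thesis by simp
    qed
  qed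
qed

theorem lemma3p4:
  fixes p C :: real and V :: "real^2 \<Rightarrow> real" and DV :: "real^2 \<Rightarrow> real^2"
  assumes "p > 1"
    and "\<And>x. (V has_derivative (\<lambda>h. DV x \<bullet> h)) (at x)"
    and "continuous_on UNIV DV"
    and "\<And>x. V x > 0"
    and "filterlim V at_top at_infinity"
    and "C > 0"
    and "AE x in lborel. norm (DV x) \<le> C * V x powr (3/2)"
  shows "\<exists>\<sigma>>0. \<forall>(u, g) \<in> Nehari p V. Ifun p V u g \<ge> \<sigma>"
proof -
  interpret Vass V DV C
    by unfold_locales (use assms in auto)
  have p: "p > 1" by (rule assms(1))
  obtain v0 where v0: "v0 > 0" and v0V: "\<And>x. V x \<ge> v0"
    using V_lower[OF Vc Vpos assms(5)] by blast
  define m where "m = nat \<lceil>(p + 1) / 2\<rceil>"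
  have m2: "real (2 * m) \<ge> p + 1"
  proof -
    have "(p + 1) / 2 \<le> real m" unfolding m_def by linarith
    then show ?thesis by simp
  qed
  have m1: "m \<ge> 1" using m2 p by (cases m) auto
  obtain K where K0: "K \<ge> 0" and K: "\<And>\<phi>. Cc_inf \<phi> \<Longrightarrow> (\<integral>\<^sup>+x. ennreal (V x * (\<phi> x)^(2 * m)) \<partial>lborel)
       \<le> ennreal K * (\<integral>\<^sup>+x. ennreal ((norm (grad \<phi> x))\<^sup>2 + V x * (\<phi> x)\<^sup>2) \<partial>lborel) ^ m"
    using J_bound[OF m1] by blast
  define k where "k = (p + 3) / (p + 1)"
  have k0: "k > 0" unfolding k_def using p by simp
  define B where "B = k / v0 * (1 + K * 3 ^ m)"
  have "0 < 1 + K * 3 ^ m" using K0 by (intro add_pos_nonneg) auto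
  then have B0: "B > 0" unfolding B_def using k0 v0 by (intro mult_pos_pos divide_pos_pos) auto
  define \<delta> where "\<delta> = min 1 (1 / B)"
  have \<delta>0: "\<delta> > 0" unfolding \<delta>_def using B0 by simp
  define \<sigma> where "\<sigma> = \<delta> * (p + 1) / (2 * (p + 3))"
  have \<sigma>0: "\<sigma> > 0" unfolding \<sigma>_def using \<delta>0 p by simp
  have main: "\<sigma> \<le> Ifun p V u g" if z: "(u, g) \<in> Nehari p V" for u g
  proof -
    have H: "H1V V u g" and nz: "\<not> (AE x in lborel. u x = 0)"
      and eq: "Vnorm2 V u g = (p + 3) / (p + 1) * L2norm2 u * (\<integral>x. V x * \<bar>u x\<bar> powr (p + 1) \<partial>lborel)"
      using z unfolding Nehari_def by auto
    note [measurable] = H1V_meas[OF H]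
    define Nn where "Nn = (\<integral>\<^sup>+x. ennreal ((norm (g x))\<^sup>2 + V x * (u x)\<^sup>2) \<partial>lborel)"
    have fin: "Nn < \<infinity>" unfolding Nn_def by (rule H1V_N_finite[OF H])
    define N where "N = Vnorm2 V u g"
    have NNn: "N = enn2real Nn" unfolding N_def Vnorm2_def Nn_def
      by (rule integral_eq_nn_integral) (auto intro!: add_nonneg_nonneg)
    have Nn0: "Nn \<noteq> 0"
    proof
      assume "Nn = 0"
      then have "AE x in lborel. ennreal ((norm (g x))\<^sup>2 + V x * (u x)\<^sup>2) = 0"
        unfolding Nn_def by (subst nn_integral_0_iff_AE[symmetric]) auto
      then have "AE x in lborel. u x = 0"
      proof eventually_elim
        case (elim x)
        then have "(norm (g x))\<^sup>2 + V x * (u x)\<^sup>2 \<le> 0" by (simp only: ennreal_eq_0_iff)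
        moreover have "0 \<le> (norm (g x))\<^sup>2" by simp
        ultimately have "V x * (u x)\<^sup>2 \<le> 0" by linarith
        then show ?case using Vpos[of x] by (simp add: mult_le_0_iff)
      qed
      with nz show False by simp
    qed
    have Npos: "0 < Nn" using Nn0 by (simp add: zero_less_iff_neq_zero)
    have NnN: "Nn = ennreal N" unfolding NNn using fin by simp
    have N0: "N > 0" unfolding NNn using fin Nn0 by (simp add: enn2real_positive_iff less_top zero_less_iff_neq_zero)
    define L where "L = L2norm2 u"
    have L0: "L \<ge> 0" unfolding L_def L2norm2_def by simp
    have LN: "L \<le> N / v0"
    proof -
      have "L = enn2real (\<integral>\<^sup>+x. ennreal ((u x)\<^sup>2) \<partial>lborel)"
        unfolding L_def L2norm2_def by (rule integral_eq_nn_integral) auto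
      also have "\<dots> \<le> N / v0"
      proof (rule enn2real_leI)
        show "0 \<le> N / v0" using N0 v0 by simp
        have "(\<integral>\<^sup>+x. ennreal ((u x)\<^sup>2) \<partial>lborel) \<le> (\<integral>\<^sup>+x. ennreal (1 / v0) * ennreal ((norm (g x))\<^sup>2 + V x * (u x)\<^sup>2) \<partial>lborel)"
        proof (rule nn_integral_mono)
          fix x
          have "v0 * (u x)\<^sup>2 \<le> V x * (u x)\<^sup>2" using v0V[of x] by (intro mult_right_mono) auto
          also have "\<dots> \<le> (norm (g x))\<^sup>2 + V x * (u x)\<^sup>2" by simp
          finally have "(u x)\<^sup>2 \<le> 1 / v0 * ((norm (g x))\<^sup>2 + V x * (u x)\<^sup>2)"
            using v0 by (simp add: field_simps)
          then have "ennreal ((u x)\<^sup>2) \<le> ennreal (1 / v0 * ((norm (g x))\<^sup>2 + V x * (u x)\<^sup>2))"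
            by (rule ennreal_leI)
          also have "\<dots> = ennreal (1 / v0) * ennreal ((norm (g x))\<^sup>2 + V x * (u x)\<^sup>2)"
            using v0 by (intro ennreal_mult) auto
          finally show "ennreal ((u x)\<^sup>2) \<le> ennreal (1 / v0) * ennreal ((norm (g x))\<^sup>2 + V x * (u x)\<^sup>2)" .
        qed
        also have "\<dots> = ennreal (1 / v0) * Nn" unfolding Nn_def by (rule nn_integral_cmult) measurable
        also have "\<dots> = ennreal (N / v0)" unfolding NnN using v0 N0
          by (simp add: ennreal_mult[symmetric])
        finally show "(\<integral>\<^sup>+x. ennreal ((u x)\<^sup>2) \<partial>lborel) \<le> ennreal (N / v0)" .
      qed
      finally show ?thesis .
    qed
    define W where "W = (\<integral>x. V x * \<bar>u x\<bar> powr (p + 1) \<partial>lborel)"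
    have W0: "W \<ge> 0" unfolding W_def by (rule integral_nonneg_AE) simp
    have WN: "W \<le> N + K * (3 * N) ^ m"
    proof -
      have "W = enn2real (\<integral>\<^sup>+x. ennreal (V x * \<bar>u x\<bar> powr (p + 1)) \<partial>lborel)"
        unfolding W_def by (rule integral_eq_nn_integral) auto
      also have "\<dots> \<le> N + K * (3 * N) ^ m"
      proof (rule enn2real_leI)
        show "0 \<le> N + K * (3 * N) ^ m" using N0 K0 by simp
        have "(\<integral>\<^sup>+x. ennreal (V x * \<bar>u x\<bar> powr (p + 1)) \<partial>lborel)
            \<le> (\<integral>\<^sup>+x. ennreal (V x * (u x)\<^sup>2) + ennreal (V x * (u x) ^ (2 * m)) \<partial>lborel)"
        proof (rule nn_integral_mono)
          fix x
          have "V x * \<bar>u x\<bar> powr (p + 1) \<le> V x * ((u x)\<^sup>2 + (u x) ^ (2 * m))"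
            by (intro mult_left_mono powr_split[OF p m2]) simp
          then have "ennreal (V x * \<bar>u x\<bar> powr (p + 1)) \<le> ennreal (V x * (u x)\<^sup>2 + V x * (u x) ^ (2 * m))"
            by (intro ennreal_leI) (simp add: distrib_left)
          also have "\<dots> = ennreal (V x * (u x)\<^sup>2) + ennreal (V x * (u x) ^ (2 * m))"
            by (intro ennreal_plus) (auto simp: power_mult zero_le_power2)
          finally show "ennreal (V x * \<bar>u x\<bar> powr (p + 1)) \<le> ennreal (V x * (u x)\<^sup>2) + ennreal (V x * (u x) ^ (2 * m))" .
        qed
        also have "\<dots> = (\<integral>\<^sup>+x. ennreal (V x * (u x)\<^sup>2) \<partial>lborel) + (\<integral>\<^sup>+x. ennreal (V x * (u x) ^ (2 * m)) \<partial>lborel)"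
          by (rule nn_integral_add) auto
        also have "(\<integral>\<^sup>+x. ennreal (V x * (u x)\<^sup>2) \<partial>lborel) \<le> Nn"
          unfolding Nn_def by (intro nn_integral_mono ennreal_leI) simp
        also have "(\<integral>\<^sup>+x. ennreal (V x * (u x) ^ (2 * m)) \<partial>lborel) \<le> ennreal K * (3 * Nn) ^ m"
          unfolding Nn_def by (rule H1V_J[OF H K Npos[unfolded Nn_def]])
        also have "Nn + ennreal K * (3 * Nn) ^ m = ennreal (N + K * (3 * N) ^ m)"
        proof -
          have e3: "ennreal (3 ^ m) = 3 ^ m" using ennreal_power[of 3 m] by simp
          show ?thesis unfolding NnN using N0 K0 by (simp add: ennreal_mult ennreal_power ennreal_plus e3[symmetric])
        qed
        finally show "(\<integral>\<^sup>+x. ennreal (V x * \<bar>u x\<bar> powr (p + 1)) \<partial>lborel) \<le> ennreal (N + K * (3 * N) ^ m)"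
          by - (simp add: add_mono)
      qed
      finally show ?thesis .
    qed
    have NLW: "N = k * L * W" unfolding N_def L_def W_def k_def using eq by simp
    have Nd: "N \<ge> \<delta>"
    proof (rule ccontr)
      assume "\<not> N \<ge> \<delta>"
      then have Nlt: "N < \<delta>" by simp
      have N1: "N \<le> 1" using Nlt unfolding \<delta>_def by simp
      have NB: "B * N < 1"
      proof -
        have "N < 1 / B" using Nlt unfolding \<delta>_def by simp
        then show ?thesis using B0 by (simp add: field_simps)
      qed
      have "N ^ m \<le> N ^ 1" by (rule power_decreasing[OF m1]) (use N0 N1 in auto)
      then have Nm: "(3 * N) ^ m \<le> 3 ^ m * N" by (simp add: power_mult_distrib)
      have "W \<le> N + K * (3 ^ m * N)" using WN Nm K0 by (meson add_left_mono mult_left_mono order_trans)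
      then have W2: "W \<le> (1 + K * 3 ^ m) * N" by (simp add: algebra_simps)
      have "N = k * L * W" by (rule NLW)
      also have "\<dots> \<le> k * (N / v0) * ((1 + K * 3 ^ m) * N)"
        using LN W2 L0 W0 k0 N0 v0 by (intro mult_mono mult_left_mono) auto
      also have "\<dots> = B * N * N" unfolding B_def by (simp add: field_simps)
      finally have "N * 1 \<le> N * (B * N)" by (simp add: mult_ac)
      then have "1 \<le> B * N" using N0 by (simp add: mult_le_cancel_left)
      with NB show False by simp
    qed
    have LW: "L * W = N * (p + 1) / (p + 3)"
      using NLW p unfolding k_def by (simp add: field_simps)
    have "Ifun p V u g = N / 2 - L * W / (p + 1)"
      unfolding Ifun_def N_def L_def W_def by simp
    also have "\<dots> = N / 2 - N / (p + 3)"
      unfolding LW using p by simp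
    also have "\<dots> = N * (p + 1) / (2 * (p + 3))"
    proof -
      have "p + 3 \<noteq> 0" using p by simp
      then show ?thesis by (simp add: field_simps)
    qed
    finally have I: "Ifun p V u g = N * (p + 1) / (2 * (p + 3))" .
    show ?thesis unfolding I \<sigma>_def
      using Nd p by (intro divide_right_mono mult_right_mono) auto
  qed
  show ?thesis
    using \<sigma>0 main by blast
qed


end
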